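(* Let $s\geqslant1$. (1) The Markov rule fails in $\mathcal B_s$: there is an evaluated formula $\varphi(x)$ of $L_s$ (free number variable $x$, other parameters replaced by elements of the domains) such that $\mathcal B_s\Vdash\forall x[\varphi(x)\vee\neg\varphi(x)]$ and $\mathcal B_s\Vdash\neg\neg\exists x\varphi(x)$, but not $\mathcal B_s\Vdash\exists x\varphi(x)$. (2) Markov's principle fails in $\mathcal B_s$: for such a $\varphi$, $\mathcal B_s\not\Vdash\forall x[\varphi(x)\vee\neg\varphi(x)]\wedge\neg\neg\exists x\varphi(x)\supset\exists x\varphi(x)$.
   Context: Language $L_s$ ($s\geqslant1$): variables $x,y,\dots$ (type 0), and for $1\leqslant n\leqslant s$: $F^n$ ($n$-functionals), $A^n$ (lawlike), $\mathcal F^n$ (lawless), of type $n$; constants $0,K^n$; function symbols $S,+,\cdot,N^n,Ap^n$ ($Z(t)=Ap(Z,t)$ lowers type by 1; a 1-functional applied to a term is a term); atomic formulas $t=_0\tau$, $Z=_nV$; connectives $\bot,\wedge,\vee,\supset$, quantifiers; $\neg\varphi:=\varphi\supset\bot$; terms for primitive recursive functions/relations (e.g. bounded quantifiers, $<$) are available by the usual definitions. Beth model $\mathcal{B}_s$: path = maximal chain. $a_0=\omega$, $d_0=\{\langle x\rangle:x\in\omega^*\}$ ordered by extension ($\langle x\rangle\preccurlyeq_0\langle y\rangle$ iff $y$ is an initial segment of $x$). For $k\geqslant1$: $a_k$ = partial $f:d_{k-1}\times\omega\dashrightarrow a_{k-1}$, monotonic ($y\preccurlyeq_{k-1}x\Rightarrow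 f(x,\cdot)\subseteq f(y,\cdot)$) and complete (along every path of $d_{k-1}$ the union of $f(x,\cdot)$ is total); $d_k$ = tuples $\langle x_0,\dots,x_k\rangle$ of sequences of common length $m=lh$ with $x_i\in a_i^{(m)}$, ordered componentwise by extension. Nodes $M=d_{s-1}$, root $\varepsilon=\langle\langle\rangle,\dots,\langle\rangle\rangle$, $\bar\alpha(k)=\langle\alpha_0,\dots,\alpha_{k-1}\rangle$. Domains $\omega$, $a_k$, $b_k=\{f\in a_k:f(\text{root},\cdot)\text{ total}\}$, $l_k=\{\nu_k(\xi)\}$ with $\xi:\omega\times a_{k-1}\to a_{k-1}$, all $\xi(n,\cdot)$ bijective, $\nu_k(\xi)(x,n)=\xi(n,\langle\langle x\rangle_{k-1}\rangle_n)$ for $n<lh(x)$, else undefined. $\widehat K^1(x,n)=0$, $\widehat K^{k+1}(x,n)=\widehat K^k$; usual $0,S,+,\cdot$; $N^k\mapsto S^k$ ($S^0(x)=x+1$, $S^{n+1}(f)=S^n\circ f$); at node $\alpha$, $Ap^k(f,n)=f(\bar\alpha(k),n)$. $Val(\alpha,Z=V)=T$ iff both values at $\alpha$ defined and equal. Beth forcing: atomic, $\vee$, $\exists$ require every path through $\alpha$ to meet a node where the valuation holds / a disjunct / an instance is forced; $\supset$: every later node (including $\alpha$) forcing the antecedent forces the consequent; $\wedge,\forall$ pointwise; $\bot$ never forced; $\mathcal B_s\Vdash\varphi$ iff $\varepsilon\Vdash\varphi$. *)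

theory Defs
  imports Main "HOL-Library.Sublist"
begin

text \<open>Sorts of variables: number variables (type 0), n-functionals F^n (ranging over a_n),
  lawlike A^n (ranging over b_n), lawless (ranging over l_n).\<close>
datatype sort = SNum | SFun nat | SLawlike nat | SLawless nat
datatype var = V sort nat

datatype trm =
    Var var
  | Zero
  | Kc nat
  | Sc trm
  | Pl trm trm
  | Tm trm trm
  | Nc nat trm
  | Ap nat trm trm

datatype fm =
    Bot
  | Eq nat trm trm
  | Conj fm fm
  | Disj fm fm
  | Imp fm fm
  | All var fm
  | Ex var fm

definition Neg :: "fm \<Rightarrow> fm" where "Neg \<phi> = Imp \<phi> Bot"

definition lvl_ok :: "nat \<Rightarrow> nat \<Rightarrow> bool" where
  "lvl_ok s n \<longleftrightarrow> 1 \<le> n \<and> n \<le> s"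

fun var_ok :: "nat \<Rightarrow> var \<Rightarrow> bool" where
  "var_ok s (V SNum _) = True"
| "var_ok s (V (SFun n) _) = lvl_ok s n"
| "var_ok s (V (SLawlike n) _) = lvl_ok s n"
| "var_ok s (V (SLawless n) _) = lvl_ok s n"

fun vtype :: "var \<Rightarrow> nat" where
  "vtype (V SNum _) = 0"
| "vtype (V (SFun n) _) = n"
| "vtype (V (SLawlike n) _) = n"
| "vtype (V (SLawless n) _) = n"

primrec ty :: "nat \<Rightarrow> trm \<Rightarrow> nat option" where
  "ty s (Var v) = (if var_ok s v then Some (vtype v) else None)"
| "ty s Zero = Some 0"
| "ty s (Kc n) = (if lvl_ok s n then Some n else None)"
| "ty s (Sc t) = (if ty s t = Some 0 then Some 0 else None)"
| "ty s (Pl t r) = (if ty s t = Some 0 \<and> ty s r = Some 0 then Some 0 else None)"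
| "ty s (Tm t r) = (if ty s t = Some 0 \<and> ty s r = Some 0 then Some 0 else None)"
| "ty s (Nc n t) = (if lvl_ok s n \<and> ty s t = Some n then Some n else None)"
| "ty s (Ap n Z t) = (if lvl_ok s n \<and> ty s Z = Some n \<and> ty s t = Some 0 then Some (n - 1) else None)"

primrec wf_fm :: "nat \<Rightarrow> fm \<Rightarrow> bool" where
  "wf_fm s Bot = True"
| "wf_fm s (Eq n t r) = (ty s t = Some n \<and> ty s r = Some n)"
| "wf_fm s (Conj \<phi> \<psi>) = (wf_fm s \<phi> \<and> wf_fm s \<psi>)"
| "wf_fm s (Disj \<phi> \<psi>) = (wf_fm s \<phi> \<and> wf_fm s \<psi>)"
| "wf_fm s (Imp \<phi> \<psi>) = (wf_fm s \<phi> \<and> wf_fm s \<psi>)"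
| "wf_fm s (All v \<phi>) = (var_ok s v \<and> wf_fm s \<phi>)"
| "wf_fm s (Ex v \<phi>) = (var_ok s v \<and> wf_fm s \<phi>)"

text \<open>The universe is a type 'u with an injection num of the natural numbers (a_0 = omega)
  and an application map app: app u x n is the (partial) value of the functional u at
  node x and argument n.  Nodes (elements of d_k) are lists of k+1 sequences.\<close>

text \<open>ext y x: y extends x componentwise, i.e. y is later than x (y \<preccurlyeq> x).\<close>
definition ext :: "'a list list \<Rightarrow> 'a list list \<Rightarrow> bool" where
  "ext y x \<longleftrightarrow> length y = length x \<and> (\<forall>i<length x. prefix (x ! i) (y ! i))"

text \<open>d_k built from the list [a_0,...,a_k].\<close>
definition Dset :: "'u set list \<Rightarrow> 'u list list set" where
  "Dset As = {x. length x = length As \<and>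
      (\<exists>m. \<forall>i<length As. length (x ! i) = m \<and> set (x ! i) \<subseteq> As ! i)}"

definition is_chain :: "'u list list set \<Rightarrow> 'u list list set \<Rightarrow> bool" where
  "is_chain D P \<longleftrightarrow> P \<subseteq> D \<and> (\<forall>x\<in>P. \<forall>y\<in>P. ext x y \<or> ext y x)"

definition is_path :: "'u list list set \<Rightarrow> 'u list list set \<Rightarrow> bool" where
  "is_path D P \<longleftrightarrow> is_chain D P \<and> (\<forall>Q. is_chain D Q \<and> P \<subseteq> Q \<longrightarrow> Q = P)"

definition adm :: "'u list list set \<Rightarrow> 'u set \<Rightarrow> ('u list list \<Rightarrow> nat \<Rightarrow> 'u option) \<Rightarrow> bool" where
  "adm D Aprev g \<longleftrightarrow>
     (\<forall>x n v. g x n = Some v \<longrightarrow> x \<in> D \<and> v \<in> Aprev) \<and>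
     (\<forall>x y n v. x \<in> D \<and> y \<in> D \<and> ext y x \<and> g x n = Some v \<longrightarrow> g y n = Some v) \<and>
     (\<forall>P. is_path D P \<longrightarrow> (\<forall>n. \<exists>x\<in>P. g x n \<noteq> None))"

primrec Alist :: "(nat \<Rightarrow> 'u) \<Rightarrow> ('u \<Rightarrow> 'u list list \<Rightarrow> nat \<Rightarrow> 'u option) \<Rightarrow> nat \<Rightarrow> 'u set list" where
  "Alist num app 0 = [range num]"
| "Alist num app (Suc k) = Alist num app k @
     [{u. adm (Dset (Alist num app k)) (last (Alist num app k)) (app u)}]"

definition Adom :: "(nat \<Rightarrow> 'u) \<Rightarrow> ('u \<Rightarrow> 'u list list \<Rightarrow> nat \<Rightarrow> 'u option) \<Rightarrow> nat \<Rightarrow> 'u set" where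
  "Adom num app k = last (Alist num app k)"

definition Dnodes :: "(nat \<Rightarrow> 'u) \<Rightarrow> ('u \<Rightarrow> 'u list list \<Rightarrow> nat \<Rightarrow> 'u option) \<Rightarrow> nat \<Rightarrow> 'u list list set" where
  "Dnodes num app k = Dset (Alist num app k)"

text \<open>The universe faithfully represents the hierarchy up to level s: numbers are represented
  injectively, every monotonic complete partial function of level k+1 (k < s) is represented,
  and representations are extensional (unique).\<close>
definition full_universe :: "nat \<Rightarrow> (nat \<Rightarrow> 'u) \<Rightarrow> ('u \<Rightarrow> 'u list list \<Rightarrow> nat \<Rightarrow> 'u option) \<Rightarrow> bool" where
  "full_universe s num app \<longleftrightarrow>
     inj num \<and>
     (\<forall>k<s. \<forall>g. adm (Dnodes num app k) (Adom num app k) g \<longrightarrow> (\<exists>u. app u = g)) \<and>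
     (\<forall>k\<in>{1..s}. \<forall>u\<in>Adom num app k. \<forall>v\<in>Adom num app k. app u = app v \<longrightarrow> u = v)"

definition Blaw :: "(nat \<Rightarrow> 'u) \<Rightarrow> ('u \<Rightarrow> 'u list list \<Rightarrow> nat \<Rightarrow> 'u option) \<Rightarrow> nat \<Rightarrow> 'u set" where
  "Blaw num app k = {u \<in> Adom num app k. \<forall>n. app u (replicate k []) n \<noteq> None}"

text \<open>l_k: lawless domain, nu_k(xi)(x,n) = xi(n, (x_{k-1})_n) for n < lh(x).\<close>
definition Llaw :: "(nat \<Rightarrow> 'u) \<Rightarrow> ('u \<Rightarrow> 'u list list \<Rightarrow> nat \<Rightarrow> 'u option) \<Rightarrow> nat \<Rightarrow> 'u set" where
  "Llaw num app k = {u \<in> Adom num app k. \<exists>\<xi> :: nat \<Rightarrow> 'u \<Rightarrow> 'u.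
      (\<forall>n. bij_betw (\<xi> n) (Adom num app (k - 1)) (Adom num app (k - 1))) \<and>
      app u = (\<lambda>x n. if x \<in> Dnodes num app (k - 1) \<and> n < length (hd x)
                      then Some (\<xi> n (x ! (k - 1) ! n)) else None)}"

text \<open>Interpretation of K^k (with Khat 0 = 0 so that Khat 1 (x,n) = 0).\<close>
primrec Khat :: "(nat \<Rightarrow> 'u) \<Rightarrow> ('u \<Rightarrow> 'u list list \<Rightarrow> nat \<Rightarrow> 'u option) \<Rightarrow> nat \<Rightarrow> 'u" where
  "Khat num app 0 = num 0"
| "Khat num app (Suc k) =
     (SOME u. app u = (\<lambda>x n. if x \<in> Dnodes num app k then Some (Khat num app k) else None))"

primrec Sfun :: "(nat \<Rightarrow> 'u) \<Rightarrow> ('u \<Rightarrow> 'u list list \<Rightarrow> nat \<Rightarrow> 'u option) \<Rightarrow> nat \<Rightarrow> 'u \<Rightarrow> 'u" where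
  "Sfun num app 0 u = num (Suc (inv num u))"
| "Sfun num app (Suc k) u =
     (SOME v. app v = (\<lambda>x n. map_option (Sfun num app k) (app u x n)))"

primrec ev :: "(nat \<Rightarrow> 'u) \<Rightarrow> ('u \<Rightarrow> 'u list list \<Rightarrow> nat \<Rightarrow> 'u option) \<Rightarrow>
    'u list list \<Rightarrow> (var \<Rightarrow> 'u) \<Rightarrow> trm \<Rightarrow> 'u option" where
  "ev num app \<alpha> \<sigma> (Var v) = Some (\<sigma> v)"
| "ev num app \<alpha> \<sigma> Zero = Some (num 0)"
| "ev num app \<alpha> \<sigma> (Kc k) = Some (Khat num app k)"
| "ev num app \<alpha> \<sigma> (Sc t) = map_option (\<lambda>u. num (Suc (inv num u))) (ev num app \<alpha> \<sigma> t)"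
| "ev num app \<alpha> \<sigma> (Pl t r) = (case (ev num app \<alpha> \<sigma> t, ev num app \<alpha> \<sigma> r) of
      (Some a, Some b) \<Rightarrow> Some (num (inv num a + inv num b)) | _ \<Rightarrow> None)"
| "ev num app \<alpha> \<sigma> (Tm t r) = (case (ev num app \<alpha> \<sigma> t, ev num app \<alpha> \<sigma> r) of
      (Some a, Some b) \<Rightarrow> Some (num (inv num a * inv num b)) | _ \<Rightarrow> None)"
| "ev num app \<alpha> \<sigma> (Nc k t) = map_option (Sfun num app k) (ev num app \<alpha> \<sigma> t)"
| "ev num app \<alpha> \<sigma> (Ap k Z t) = (case (ev num app \<alpha> \<sigma> Z, ev num app \<alpha> \<sigma> t) of
      (Some f, Some m) \<Rightarrow> app f (take k \<alpha>) (inv num m) | _ \<Rightarrow> None)"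

fun vdom :: "(nat \<Rightarrow> 'u) \<Rightarrow> ('u \<Rightarrow> 'u list list \<Rightarrow> nat \<Rightarrow> 'u option) \<Rightarrow> var \<Rightarrow> 'u set" where
  "vdom num app (V SNum _) = range num"
| "vdom num app (V (SFun n) _) = Adom num app n"
| "vdom num app (V (SLawlike n) _) = Blaw num app n"
| "vdom num app (V (SLawless n) _) = Llaw num app n"

definition env_ok :: "nat \<Rightarrow> (nat \<Rightarrow> 'u) \<Rightarrow> ('u \<Rightarrow> 'u list list \<Rightarrow> nat \<Rightarrow> 'u option) \<Rightarrow> (var \<Rightarrow> 'u) \<Rightarrow> bool" where
  "env_ok s num app \<sigma> \<longleftrightarrow> (\<forall>v. var_ok s v \<longrightarrow> \<sigma> v \<in> vdom num app v)"

definition Mnodes :: "nat \<Rightarrow> (nat \<Rightarrow> 'u) \<Rightarrow> ('u \<Rightarrow> 'u list list \<Rightarrow> nat \<Rightarrow> 'u option) \<Rightarrow> 'u list list set" where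
  "Mnodes s num app = Dnodes num app (s - 1)"

definition root :: "nat \<Rightarrow> 'u list list" where
  "root s = replicate s []"

definition bar :: "nat \<Rightarrow> (nat \<Rightarrow> 'u) \<Rightarrow> ('u \<Rightarrow> 'u list list \<Rightarrow> nat \<Rightarrow> 'u option) \<Rightarrow>
    'u list list \<Rightarrow> ('u list list \<Rightarrow> bool) \<Rightarrow> bool" where
  "bar s num app \<alpha> Q \<longleftrightarrow>
     (\<forall>P. is_path (Mnodes s num app) P \<and> \<alpha> \<in> P \<longrightarrow> (\<exists>\<beta>\<in>P. ext \<beta> \<alpha> \<and> Q \<beta>))"

primrec frc :: "nat \<Rightarrow> (nat \<Rightarrow> 'u) \<Rightarrow> ('u \<Rightarrow> 'u list list \<Rightarrow> nat \<Rightarrow> 'u option) \<Rightarrow>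
    fm \<Rightarrow> 'u list list \<Rightarrow> (var \<Rightarrow> 'u) \<Rightarrow> bool" where
  "frc s num app Bot \<alpha> \<sigma> = False"
| "frc s num app (Eq n t r) \<alpha> \<sigma> =
     bar s num app \<alpha> (\<lambda>\<beta>. \<exists>a. ev num app \<beta> \<sigma> t = Some a \<and> ev num app \<beta> \<sigma> r = Some a)"
| "frc s num app (Conj \<phi> \<psi>) \<alpha> \<sigma> = (frc s num app \<phi> \<alpha> \<sigma> \<and> frc s num app \<psi> \<alpha> \<sigma>)"
| "frc s num app (Disj \<phi> \<psi>) \<alpha> \<sigma> =
     bar s num app \<alpha> (\<lambda>\<beta>. frc s num app \<phi> \<beta> \<sigma> \<or> frc s num app \<psi> \<beta> \<sigma>)"
| "frc s num app (Imp \<phi> \<psi>) \<alpha> \<sigma> =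
     (\<forall>\<beta>\<in>Mnodes s num app. ext \<beta> \<alpha> \<longrightarrow> frc s num app \<phi> \<beta> \<sigma> \<longrightarrow> frc s num app \<psi> \<beta> \<sigma>)"
| "frc s num app (All v \<phi>) \<alpha> \<sigma> = (\<forall>d\<in>vdom num app v. frc s num app \<phi> \<alpha> (\<sigma>(v := d)))"
| "frc s num app (Ex v \<phi>) \<alpha> \<sigma> =
     bar s num app \<alpha> (\<lambda>\<beta>. \<exists>d\<in>vdom num app v. frc s num app \<phi> \<beta> (\<sigma>(v := d)))"

end

theory Submission
  imports Defs
begin


lemma ext_refl: "ext x x" by (simp add: ext_def)
lemma ext_trans: "ext z y \<Longrightarrow> ext y x \<Longrightarrow> ext z x"
  by (auto simp: ext_def intro: prefix_order.order_trans)

lemma Dset_len: "x \<in> Dset As \<Longrightarrow> i < length As \<Longrightarrow> length (x!i) = length (x!0)"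
  unfolding Dset_def by (cases "length As") auto

lemma ext_len: "x \<in> Dset As \<Longrightarrow> ext y x \<Longrightarrow> 0 < length As \<Longrightarrow> length (x!0) \<le> length (y!0)"
  unfolding ext_def Dset_def by (auto intro: prefix_length_le)

lemma ext_eq: assumes "x \<in> Dset As" "y \<in> Dset As" "ext y x" "length (x!0) = length (y!0)"
  shows "y = x"
proof (rule nth_equalityI)
  show "length y = length x" using assms(3) by (simp add: ext_def)
  fix i assume "i < length y"
  hence i: "i < length x" "i < length As" using assms(1,3) by (auto simp: ext_def Dset_def)
  have "prefix (x!i) (y!i)" using assms(3) i by (simp add: ext_def)
  moreover have "length (x!i) = length (y!i)" using Dset_len[OF assms(1) i(2)] Dset_len[OF assms(2) i(2)] assms(4) by simp
  ultimately show "y!i = x!i" by (auto simp: prefix_def)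
qed

lemma root_in: "replicate (length As) [] \<in> Dset As"
  unfolding Dset_def by auto

lemma ext_root: "x \<in> Dset As \<Longrightarrow> ext x (replicate (length As) [])"
  unfolding Dset_def ext_def by auto

lemma path_ne: "is_path D P \<Longrightarrow> r \<in> D \<Longrightarrow> P \<noteq> {}"
  unfolding is_path_def is_chain_def
  by (metis empty_iff empty_subsetI insert_subset singletonD ext_refl)

definition extnode :: "'u list list \<Rightarrow> (nat \<Rightarrow> 'u) \<Rightarrow> 'u list list" where
  "extnode t c = map (\<lambda>i. t!i @ [c i]) [0..<length t]"

lemma extnode_in: assumes "t \<in> Dset As" "\<forall>i<length As. c i \<in> As!i"
  shows "extnode t c \<in> Dset As" "ext (extnode t c) t" "0 < length As \<Longrightarrow> length (extnode t c ! 0) = Suc (length (t!0))"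
    "0 < length As \<Longrightarrow> extnode t c ! 0 = t!0 @ [c 0]"
proof -
  from assms(1) obtain m where t: "length t = length As" "\<forall>i<length As. length (t!i) = m \<and> set (t!i) \<subseteq> As!i"
    unfolding Dset_def by auto
  show "extnode t c \<in> Dset As" unfolding Dset_def extnode_def
    using t assms(2) by (auto intro!: exI[of _ "Suc m"])
  show "ext (extnode t c) t" unfolding ext_def extnode_def by auto
  show "0 < length As \<Longrightarrow> extnode t c ! 0 = t!0 @ [c 0]" unfolding extnode_def using t by simp
  show "0 < length As \<Longrightarrow> length (extnode t c ! 0) = Suc (length (t!0))" 
    using t unfolding extnode_def by simp
qed

lemma path_unbounded:
  assumes P: "is_path (Dset As) P" and L: "0 < length As" and ne: "\<forall>i<length As. As!i \<noteq> {}"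
  shows "\<exists>x\<in>P. m \<le> length (x!0)"
proof (rule ccontr)
  assume "\<not> ?thesis"
  hence lt: "\<forall>x\<in>P. length (x!0) < m" by auto
  have Pne: "P \<noteq> {}" using path_ne[OF P root_in] .
  have sub: "P \<subseteq> Dset As" and ch: "\<forall>x\<in>P. \<forall>y\<in>P. ext x y \<or> ext y x"
    using P by (auto simp: is_path_def is_chain_def)
  let ?S = "(\<lambda>x. length (x!0)) ` P"
  have "?S \<subseteq> {..<m}" using lt by auto
  hence fin: "finite ?S" using finite_subset by blast
  have "Max ?S \<in> ?S" using fin Pne by (intro Max_in) auto
  then obtain t where tP: "t \<in> P" and tmax: "length (t!0) = Max ?S" by auto
  have above: "ext t x" if "x \<in> P" for x
  proof -
    have "length (x!0) \<le> length (t!0)" using tmax fin that by simp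
    moreover have "ext x t \<Longrightarrow> length (t!0) \<le> length (x!0)" using ext_len[of t As x] sub tP L by auto
    moreover have "ext t x \<or> ext x t" using ch that tP by blast
    moreover have "x \<in> Dset As" "t \<in> Dset As" using sub that tP by auto
    ultimately show ?thesis using ext_eq[of t As x] ext_refl[of t] by fastforce
  qed
  define c where "c = (\<lambda>i. SOME a. a \<in> As!i)"
  have c: "\<forall>i<length As. c i \<in> As!i" using ne by (auto simp: c_def some_in_eq)
  note E = extnode_in[OF subsetD[OF sub tP] c]
  have ab2: "\<forall>x\<in>P. ext (extnode t c) x" using above ext_trans[OF E(2)] by blast
  have "is_chain (Dset As) (insert (extnode t c) P)"
    unfolding is_chain_def
  proof (intro conjI ballI)
    show "insert (extnode t c) P \<subseteq> Dset As" using sub E(1) by blast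
    fix x y assume "x \<in> insert (extnode t c) P" "y \<in> insert (extnode t c) P"
    thus "ext x y \<or> ext y x" using ab2 ch ext_refl by blast
  qed
  moreover have "\<forall>Q. is_chain (Dset As) Q \<and> P \<subseteq> Q \<longrightarrow> Q = P" using P by (simp add: is_path_def)
  ultimately have "insert (extnode t c) P = P" using subset_insertI by blast
  hence "extnode t c \<in> P" by blast
  hence "length (extnode t c ! 0) \<le> length (t!0)" using tmax fin by simp
  thus False using E(3)[OF L] by simp
qed

definition nodeseq :: "nat \<Rightarrow> (nat \<Rightarrow> nat \<Rightarrow> 'a) \<Rightarrow> nat \<Rightarrow> 'a list list" where
  "nodeseq L W m = map (\<lambda>i. map (W i) [0..<m]) [0..<L]"

lemma nodeseq_in: "\<forall>i<length As. \<forall>j. W i j \<in> As!i \<Longrightarrow> nodeseq (length As) W m \<in> Dset As"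
  unfolding Dset_def nodeseq_def by (auto intro!: exI[of _ m])

lemma nodeseq_ext: assumes "m \<le> m'" shows "ext (nodeseq L W m') (nodeseq L W m)"
proof -
  have "map (W i) [0..<m] = take m (map (W i) [0..<m'])" for i using assms by (simp add: take_map)
  thus ?thesis unfolding ext_def nodeseq_def by (simp add: take_is_prefix)
qed

lemma nodeseq_len: "0 < L \<Longrightarrow> length (nodeseq L W m ! 0) = m"
  unfolding nodeseq_def by simp

lemma path_W:
  assumes L: "0 < length As" and W: "\<forall>i<length As. \<forall>j. W i j \<in> As!i"
  shows "is_path (Dset As) (range (nodeseq (length As) W))"
proof -
  have ch: "is_chain (Dset As) (range (nodeseq (length As) W))"
    unfolding is_chain_def
  proof (intro conjI ballI)
    show "range (nodeseq (length As) W) \<subseteq> Dset As" using nodeseq_in[OF W] by blast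
    fix x y assume "x \<in> range (nodeseq (length As) W)" "y \<in> range (nodeseq (length As) W)"
    then obtain a b where "x = nodeseq (length As) W a" "y = nodeseq (length As) W b" by blast
    thus "ext x y \<or> ext y x" using nodeseq_ext nle_le by metis
  qed
  moreover have "Q = range (nodeseq (length As) W)" if Q: "is_chain (Dset As) Q" "range (nodeseq (length As) W) \<subseteq> Q" for Q
  proof
    show "Q \<subseteq> range (nodeseq (length As) W)"
    proof
      fix y assume y: "y \<in> Q"
      let ?m = "length (y!0)"
      have yD: "y \<in> Dset As" using Q y by (auto simp: is_chain_def)
      have nD: "nodeseq (length As) W ?m \<in> Dset As" using nodeseq_in[OF W] .
      have "ext y (nodeseq (length As) W ?m) \<or> ext (nodeseq (length As) W ?m) y"
        using Q y unfolding is_chain_def by blast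
      hence "y = nodeseq (length As) W ?m"
        using ext_eq[OF nD yD] ext_eq[OF yD nD] nodeseq_len[OF L, of W "length (y!0)"] by auto
      thus "y \<in> range (nodeseq (length As) W)" by blast
    qed
  qed (use Q in auto)
  ultimately show ?thesis unfolding is_path_def by blast
qed

lemma exists_path:
  assumes x: "x \<in> Dset As" and L: "0 < length As" and ne: "\<forall>i<length As. As!i \<noteq> {}"
  shows "\<exists>P. is_path (Dset As) P \<and> x \<in> P"
proof -
  define c where "c = (\<lambda>i. SOME a. a \<in> As!i)"
  have c: "\<forall>i<length As. c i \<in> As!i" using ne by (auto simp: c_def some_in_eq)
  define W where "W = (\<lambda>i j. if j < length (x!i) then x!i!j else c i)"
  have W: "\<forall>i<length As. \<forall>j. W i j \<in> As!i" using x c unfolding W_def Dset_def by (auto, metis nth_mem subsetD)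
  have "nodeseq (length As) W (length (x!0)) = x"
  proof (rule nth_equalityI)
    show "length (nodeseq (length As) W (length (x ! 0))) = length x" using x by (simp add: nodeseq_def Dset_def)
    fix i assume "i < length (nodeseq (length As) W (length (x ! 0)))"
    hence i: "i < length As" by (simp add: nodeseq_def)
    show "nodeseq (length As) W (length (x ! 0)) ! i = x ! i"
      using Dset_len[OF x i] i unfolding nodeseq_def W_def by (auto intro: nth_equalityI)
  qed
  thus ?thesis using path_W[OF L W] by (metis rangeI)
qed



lemma length_Alist: "length (Alist num app k) = Suc k" by (induct k) auto

lemma Adom_0: "Adom num app 0 = range num" by (simp add: Adom_def)

lemma Adom_Suc: "Adom num app (Suc k) = {u. adm (Dnodes num app k) (Adom num app k) (app u)}"
  by (simp add: Adom_def Dnodes_def)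

lemma Alist_nth: "i \<le> k \<Longrightarrow> Alist num app k ! i = Adom num app i"
proof (induct k arbitrary: i)
  case 0 thus ?case by (simp add: Adom_def)
next
  case (Suc k)
  show ?case
  proof (cases "i \<le> k")
    case True thus ?thesis using Suc by (simp add: nth_append length_Alist)
  next
    case False
    hence "i = Suc k" using Suc by simp
    thus ?thesis by (simp add: nth_append length_Alist Adom_def Dnodes_def)
  qed
qed

lemma adm_const:
  assumes "c \<in> Adom num app k"
  shows "adm (Dnodes num app k) (Adom num app k) (\<lambda>x n. if x \<in> Dnodes num app k then Some c else None)"
  unfolding adm_def
proof (intro conjI allI impI)
  fix P n assume P: "is_path (Dnodes num app k) P"
  have "replicate (length (Alist num app k)) [] \<in> Dnodes num app k" by (simp add: Dnodes_def root_in)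
  from path_ne[OF P this] obtain x where "x \<in> P" by blast
  moreover have "P \<subseteq> Dnodes num app k" using P by (simp add: is_path_def is_chain_def)
  ultimately show "\<exists>x\<in>P. (if x \<in> Dnodes num app k then Some c else None) \<noteq> None" by auto
qed (use assms in \<open>auto split: if_splits\<close>)

lemma prefix_nth: "prefix xs ys \<Longrightarrow> n < length xs \<Longrightarrow> xs!n = ys!n"
  by (auto simp: prefix_def nth_append)

definition gen :: "(nat \<Rightarrow> 'u) \<Rightarrow> ('u \<Rightarrow> 'u list list \<Rightarrow> nat \<Rightarrow> 'u option) \<Rightarrow> nat \<Rightarrow> 'u list list \<Rightarrow> nat \<Rightarrow> 'u option" where
  "gen num app k = (\<lambda>x n. if x \<in> Dnodes num app k \<and> n < length (hd x) then Some (x!k!n) else None)"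

lemma hd_nth0: "x \<noteq> [] \<Longrightarrow> hd x = x!0" by (simp add: hd_conv_nth)

lemma adm_gen:
  assumes ne: "\<forall>i\<le>k. Adom num app i \<noteq> {}"
  shows "adm (Dnodes num app k) (Adom num app k) (gen num app k)"
  unfolding adm_def
proof (intro conjI allI impI)
  let ?As = "Alist num app k"
  have L: "0 < length ?As" "k < length ?As" by (auto simp: length_Alist)
  have neA: "\<forall>i<length ?As. ?As!i \<noteq> {}" using ne by (simp add: length_Alist Alist_nth)
  have xne: "x \<noteq> []" if "x \<in> Dnodes num app k" for x using that by (auto simp: Dnodes_def Dset_def length_Alist)
  fix x n v assume g: "gen num app k x n = Some v"
  hence x: "x \<in> Dnodes num app k" and n: "n < length (x!0)" and v: "v = x!k!n"
    by (auto simp: gen_def hd_nth0 xne split: if_splits)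
  show "x \<in> Dnodes num app k" by fact
  have "length (x!k) = length (x!0)" using Dset_len[of x ?As k] x L by (simp add: Dnodes_def)
  hence "v \<in> set (x!k)" using n v by simp
  moreover have "set (x!k) \<subseteq> ?As!k" using x L unfolding Dnodes_def Dset_def by auto
  ultimately show "v \<in> Adom num app k" by (auto simp: Alist_nth)
next
  let ?As = "Alist num app k"
  have L: "0 < length ?As" "k < length ?As" by (auto simp: length_Alist)
  have xne: "x \<noteq> []" if "x \<in> Dnodes num app k" for x using that by (auto simp: Dnodes_def Dset_def length_Alist)
  fix x y n v assume a: "x \<in> Dnodes num app k \<and> y \<in> Dnodes num app k \<and> ext y x \<and> gen num app k x n = Some v"
  hence x: "x \<in> Dnodes num app k" and y: "y \<in> Dnodes num app k" and e: "ext y x"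
    and n: "n < length (x!0)" and v: "v = x!k!n"
    by (auto simp: gen_def hd_nth0 xne split: if_splits)
  have p0: "prefix (x!0) (y!0)" and pk: "prefix (x!k) (y!k)" using e x L
    by (auto simp: ext_def Dnodes_def Dset_def)
  have "length (x!k) = length (x!0)" using Dset_len[of x ?As k] x L by (simp add: Dnodes_def)
  hence "x!k!n = y!k!n" using prefix_nth[OF pk] n by simp
  moreover have "n < length (y!0)" using prefix_length_le[OF p0] n by simp
  ultimately show "gen num app k y n = Some v" using y v by (simp add: gen_def hd_nth0 xne)
next
  let ?As = "Alist num app k"
  have L: "0 < length ?As" "k < length ?As" by (auto simp: length_Alist)
  have neA: "\<forall>i<length ?As. ?As!i \<noteq> {}" using ne by (simp add: length_Alist Alist_nth)
  have xne: "x \<noteq> []" if "x \<in> Dnodes num app k" for x using that by (auto simp: Dnodes_def Dset_def length_Alist)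
  fix P n assume P: "is_path (Dnodes num app k) P"
  then obtain x where x: "x \<in> P" "Suc n \<le> length (x!0)"
    using path_unbounded[of ?As P "Suc n"] L neA by (auto simp: Dnodes_def)
  have "x \<in> Dnodes num app k" using P x by (auto simp: is_path_def is_chain_def)
  thus "\<exists>x\<in>P. gen num app k x n \<noteq> None" using x by (auto simp: gen_def hd_nth0 xne)
qed

lemma Adom_ne:
  assumes fu: "full_universe s num app"
  shows "k \<le> s \<Longrightarrow> \<forall>i\<le>k. Adom num app i \<noteq> {}"
proof (induct k)
  case 0 thus ?case by (simp add: Adom_0)
next
  case (Suc k)
  then obtain c where c: "c \<in> Adom num app k" by auto
  from fu adm_const[OF c] Suc(2) obtain u where
    "app u = (\<lambda>x n. if x \<in> Dnodes num app k then Some c else None)"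
    unfolding full_universe_def by (meson Suc_le_lessD)
  hence "u \<in> Adom num app (Suc k)" using adm_const[OF c] by (simp add: Adom_Suc)
  thus ?case using Suc by (auto simp: le_Suc_eq)
qed

lemma vdom_ne:
  assumes fu: "full_universe s num app" and v: "var_ok s v"
  shows "vdom num app v \<noteq> {}"
proof -
  obtain st i where vv: "v = V st i" by (cases v)
  show ?thesis
  proof (cases st)
    case SNum thus ?thesis using vv by simp
  next
    case (SFun n)
    hence "1 \<le> n" "n \<le> s" using v vv by (auto simp: lvl_ok_def)
    thus ?thesis using Adom_ne[OF fu, of n] SFun vv by auto
  next
    case (SLawlike n)
    hence "1 \<le> n" "n \<le> s" using v vv by (auto simp: lvl_ok_def)
    then obtain k where k: "n = Suc k" "k < s" by (cases n) auto
    then obtain c where c: "c \<in> Adom num app k" using Adom_ne[OF fu, of k] by auto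
    from fu adm_const[OF c] k obtain u where
      u: "app u = (\<lambda>x n. if x \<in> Dnodes num app k then Some c else None)"
      unfolding full_universe_def by blast
    hence "u \<in> Adom num app (Suc k)" using adm_const[OF c] by (simp add: Adom_Suc)
    moreover have "replicate (Suc k) [] \<in> Dnodes num app k"
      using root_in[of "Alist num app k"] by (simp add: Dnodes_def length_Alist)
    ultimately have "u \<in> Blaw num app n" using u k by (simp add: Blaw_def)
    thus ?thesis using SLawlike vv by auto
  next
    case (SLawless n)
    hence "1 \<le> n" "n \<le> s" using v vv by (auto simp: lvl_ok_def)
    then obtain k where k: "n = Suc k" "k < s" by (cases n) auto
    have ne: "\<forall>i\<le>k. Adom num app i \<noteq> {}" using Adom_ne[OF fu, of k] k by simp
    from fu adm_gen[OF ne] k obtain u where u: "app u = gen num app k"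
      unfolding full_universe_def by blast
    hence "u \<in> Adom num app (Suc k)" using adm_gen[OF ne] by (simp add: Adom_Suc)
    moreover have "\<forall>m. bij_betw ((\<lambda>m. id) m) (Adom num app k) (Adom num app k)" by simp
    ultimately have "u \<in> Llaw num app n" using u k unfolding Llaw_def gen_def
      by (intro CollectI conjI exI[of _ "\<lambda>m. id"]) (auto simp: fun_eq_iff)
    thus ?thesis using SLawless vv by auto
  qed
qed



lemma bar_cong:
  assumes "\<forall>\<gamma>\<in>Mnodes s num app. Q \<gamma> = Q' \<gamma>"
  shows "bar s num app \<alpha> Q = bar s num app \<alpha> Q'"
proof -
  have "(\<exists>\<beta>\<in>P. ext \<beta> \<alpha> \<and> Q \<beta>) \<longleftrightarrow> (\<exists>\<beta>\<in>P. ext \<beta> \<alpha> \<and> Q' \<beta>)" if "is_path (Mnodes s num app) P" for P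
  proof -
    have "P \<subseteq> Mnodes s num app" using that by (simp add: is_path_def is_chain_def)
    thus ?thesis using assms by blast
  qed
  thus ?thesis unfolding bar_def by blast
qed

theorem theorem11p3:
  fixes s :: nat
    and num :: "nat \<Rightarrow> 'u"
    and app :: "'u \<Rightarrow> 'u list list \<Rightarrow> nat \<Rightarrow> 'u option"
  assumes "1 \<le> s"
    and "full_universe s num app"
  shows "\<exists>\<phi> x \<sigma>. wf_fm s \<phi> \<and> env_ok s num app \<sigma> \<and>
     frc s num app (All (V SNum x) (Disj \<phi> (Neg \<phi>))) (root s) \<sigma> \<and>
     frc s num app (Neg (Neg (Ex (V SNum x) \<phi>))) (root s) \<sigma> \<and>
     \<not> frc s num app (Ex (V SNum x) \<phi>) (root s) \<sigma> \<and>
     \<not> frc s num app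
         (Imp (Conj (All (V SNum x) (Disj \<phi> (Neg \<phi>))) (Neg (Neg (Ex (V SNum x) \<phi>))))
              (Ex (V SNum x) \<phi>)) (root s) \<sigma>"
proof -
  note fu = assms(2)
  have inj: "inj num" using fu by (simp add: full_universe_def)
  obtain k0 where s: "s = Suc k0" using assms(1) by (cases s) auto
  define As where "As = Alist num app k0"
  have M: "Mnodes s num app = Dset As" by (simp add: Mnodes_def Dnodes_def As_def s)
  have LA: "length As = s" by (simp add: As_def length_Alist s)
  have L: "0 < length As" using LA s by simp
  have neA: "\<forall>i<length As. As!i \<noteq> {}" using Adom_ne[OF fu, of k0] LA s
    by (simp add: As_def Alist_nth)
  have A0: "As!0 = range num" by (simp add: As_def Alist_nth Adom_0)
  have rootM: "(root s :: 'u list list) = replicate (length As) []" by (simp add: root_def LA)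
  have ne0: "\<forall>i\<le>0. Adom num app i \<noteq> {}" using Adom_ne[OF fu, of 0] by simp
  obtain f1 where f1: "app f1 = gen num app 0"
    using fu adm_gen[OF ne0] s unfolding full_universe_def by blast
  have f1A: "f1 \<in> Adom num app 1" using adm_gen[OF ne0] f1 by (simp add: Adom_Suc)
  define F where "F = V (SFun 1) 0"
  define X where "X = V SNum 0"
  have FX: "F \<noteq> X" by (simp add: F_def X_def)
  define \<sigma>0 where "\<sigma>0 = (\<lambda>v. SOME d. d \<in> vdom num app v)"
  define \<sigma> where "\<sigma> = \<sigma>0(F := f1)"
  have env: "env_ok s num app \<sigma>"
    unfolding env_ok_def
  proof (intro allI impI)
    fix v assume v: "var_ok s v"
    show "\<sigma> v \<in> vdom num app v"
    proof (cases "v = F")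
      case True thus ?thesis using f1A by (simp add: \<sigma>_def F_def)
    next
      case False thus ?thesis using vdom_ne[OF fu v] by (simp add: \<sigma>_def \<sigma>0_def some_in_eq)
    qed
  qed
  define \<phi> where "\<phi> = Eq 0 (Ap 1 (Var F) (Var X)) (Sc Zero)"
  have wf: "wf_fm s \<phi>" using assms(1) by (simp add: \<phi>_def F_def X_def lvl_ok_def)
  define val where "val = (\<lambda>\<beta> n. n < length (\<beta>!0) \<and> \<beta>!0!n = num 1)"
  have atom: "(\<exists>a. ev num app \<beta> (\<sigma>(X := num n)) (Ap 1 (Var F) (Var X)) = Some a \<and>
                   ev num app \<beta> (\<sigma>(X := num n)) (Sc Zero) = Some a) \<longleftrightarrow> val \<beta> n"
    if \<beta>: "\<beta> \<in> Dset As" for \<beta> n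
  proof -
    have lb: "length \<beta> = s" using \<beta> LA by (simp add: Dset_def)
    hence tk: "take 1 \<beta> = [\<beta>!0]" using s by (cases \<beta>) auto
    obtain m where "\<forall>i<length As. length (\<beta> ! i) = m \<and> set (\<beta> ! i) \<subseteq> As ! i" using \<beta> unfolding Dset_def by blast
    hence "set (\<beta>!0) \<subseteq> As!0" using L by blast
    hence "set (\<beta>!0) \<subseteq> range num" using A0 by simp
    hence "take 1 \<beta> \<in> Dnodes num app 0" using tk by (simp add: Dnodes_def Dset_def)
    hence "ev num app \<beta> (\<sigma>(X := num n)) (Ap 1 (Var F) (Var X)) =
        (if n < length (\<beta>!0) then Some (\<beta>!0!n) else None)"
      using FX f1 inj tk by (simp add: \<sigma>_def gen_def)
    moreover have "ev num app \<beta> (\<sigma>(X := num n)) (Sc Zero) = Some (num 1)" using inj by simp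
    ultimately show ?thesis by (simp add: val_def)
  qed
  define \<Phi> where "\<Phi> = (\<lambda>n \<beta>. bar s num app \<beta> (\<lambda>\<gamma>. val \<gamma> n))"
  have frc\<phi>: "frc s num app \<phi> \<beta> (\<sigma>(X := num n)) = \<Phi> n \<beta>" for \<beta> n
    unfolding \<phi>_def \<Phi>_def using atom by (simp add: M bar_cong)
  have mono: "val \<gamma> n = val \<beta> n" if "\<beta> \<in> Dset As" "\<gamma> \<in> Dset As" "ext \<gamma> \<beta>" "n < length (\<beta>!0)" for \<beta> \<gamma> n
  proof -
    have "prefix (\<beta>!0) (\<gamma>!0)" using that L by (auto simp: ext_def Dset_def)
    thus ?thesis using that(4) prefix_nth prefix_length_le unfolding val_def by (metis order_less_le_trans)
  qed
  have PA: "\<Phi> n \<beta>" if "val \<beta> n" for \<beta> n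
    using that ext_refl unfolding \<Phi>_def bar_def by blast
  have PB: "\<not> \<Phi> n \<gamma>" if h: "\<beta> \<in> Dset As" "n < length (\<beta>!0)" "\<not> val \<beta> n" "\<gamma> \<in> Dset As" "ext \<gamma> \<beta>" for \<beta> \<gamma> n
  proof
    assume "\<Phi> n \<gamma>"
    obtain P where P: "is_path (Dset As) P" "\<gamma> \<in> P" using exists_path[OF h(4) L neA] by blast
    then obtain \<delta> where d: "\<delta> \<in> P" "ext \<delta> \<gamma>" "val \<delta> n" using \<open>\<Phi> n \<gamma>\<close> unfolding \<Phi>_def bar_def M by blast
    have "\<delta> \<in> Dset As" using P d by (auto simp: is_path_def is_chain_def)
    thus False using mono[OF h(1) _ ext_trans[OF d(2) h(5)] h(2)] d h(3) by simp
  qed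
  define c where "c = (\<lambda>i. SOME a. a \<in> As!i)"
  have c: "\<forall>i<length As. c i \<in> As!i" using neA by (auto simp: c_def some_in_eq)
  have C: "frc s num app (All X (Disj \<phi> (Neg \<phi>))) (root s) \<sigma>"
  proof -
    have "bar s num app (root s) (\<lambda>\<beta>. \<Phi> n \<beta> \<or> frc s num app (Neg \<phi>) \<beta> (\<sigma>(X := num n)))" for n
      unfolding bar_def
    proof (intro allI impI)
      fix P assume P: "is_path (Mnodes s num app) P \<and> root s \<in> P"
      then obtain \<beta> where b: "\<beta> \<in> P" "Suc n \<le> length (\<beta>!0)"
        using path_unbounded[of As P "Suc n"] L neA M by auto
      have bD: "\<beta> \<in> Dset As" using P b M by (auto simp: is_path_def is_chain_def)
      have er: "ext \<beta> (root s)" unfolding rootM by (rule ext_root[OF bD])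
      show "\<exists>\<beta>\<in>P. ext \<beta> (root s) \<and> (\<Phi> n \<beta> \<or> frc s num app (Neg \<phi>) \<beta> (\<sigma>(X := num n)))"
      proof (cases "val \<beta> n")
        case True thus ?thesis using b er PA by blast
      next
        case False
        have "frc s num app (Neg \<phi>) \<beta> (\<sigma>(X := num n))"
          unfolding Neg_def using PB[OF bD _ False] b frc\<phi> by (simp add: M)
        thus ?thesis using b er by blast
      qed
    qed
    thus ?thesis using frc\<phi> by (auto simp: X_def)
  qed
  have D: "frc s num app (Neg (Neg (Ex X \<phi>))) (root s) \<sigma>"
  proof -
  have "\<exists>\<gamma>\<in>Mnodes s num app. ext \<gamma> \<beta> \<and> frc s num app (Ex X \<phi>) \<gamma> \<sigma>" if bM: "\<beta> \<in> Mnodes s num app" for \<beta>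
  proof -
    define c1 where "c1 = c(0 := num 1)"
    have c1: "\<forall>i<length As. c1 i \<in> As!i" using c A0 by (simp add: c1_def)
    have bD: "\<beta> \<in> Dset As" using bM M by simp
    note E = extnode_in[OF bD c1]
    let ?g = "extnode \<beta> c1"
    have "val ?g (length (\<beta>!0))" using E(4)[OF L] by (simp add: val_def nth_append, simp add: c1_def)
    hence "\<Phi> (length (\<beta>!0)) ?g" by (rule PA)
    hence "frc s num app (Ex X \<phi>) ?g \<sigma>"
      unfolding frc.simps bar_def using frc\<phi> ext_refl by (auto simp: X_def)
    thus ?thesis using E(1,2) M by auto
  qed
  thus ?thesis by (auto simp: Neg_def)
  qed
  define W0 where "W0 = (\<lambda>i (j::nat). if i = 0 then num 0 else c i)"
  have W0: "\<forall>i<length As. \<forall>j. W0 i j \<in> As!i" using c A0 by (simp add: W0_def)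
  have Zp: "is_path (Dset As) (range (nodeseq (length As) W0))" using path_W[OF L W0] .
  have "nodeseq (length As) W0 0 = root s" by (simp add: nodeseq_def rootM map_replicate_const)
  hence rZ: "root s \<in> range (nodeseq (length As) W0)" by (metis rangeI)
  have E: "\<not> frc s num app (Ex X \<phi>) (root s) \<sigma>"
  proof
    assume "frc s num app (Ex X \<phi>) (root s) \<sigma>"
    hence "\<exists>\<beta>\<in>range (nodeseq (length As) W0). ext \<beta> (root s) \<and> (\<exists>d\<in>range num. frc s num app \<phi> \<beta> (\<sigma>(X := d)))"
      using Zp rZ unfolding frc.simps bar_def M vdom.simps X_def by blast
    then obtain \<beta> d where b: "\<beta> \<in> range (nodeseq (length As) W0)" "d \<in> range num"
        "frc s num app \<phi> \<beta> (\<sigma>(X := d))" by blast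
    from b(2) obtain n where "d = num n" by blast
    hence "\<Phi> n \<beta>" using b(3) frc\<phi> by simp
    hence "\<exists>\<delta>\<in>range (nodeseq (length As) W0). ext \<delta> \<beta> \<and> val \<delta> n"
      using Zp b(1) unfolding \<Phi>_def bar_def M by blast
    then obtain \<delta> where "\<delta> \<in> range (nodeseq (length As) W0)" "val \<delta> n" by blast
    then obtain m where "val (nodeseq (length As) W0 m) n" by blast
    thus False using L unfolding val_def nodeseq_def W0_def by (auto simp: inj_eq[OF inj])
  qed
  have rM: "root s \<in> Mnodes s num app" using root_in[of As] rootM M by simp
  have Fimp: "\<not> frc s num app
         (Imp (Conj (All X (Disj \<phi> (Neg \<phi>))) (Neg (Neg (Ex X \<phi>))))
              (Ex X \<phi>)) (root s) \<sigma>"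
    using C D E rM ext_refl by auto
  show ?thesis
    apply (rule exI[of _ \<phi>], rule exI[of _ 0], rule exI[of _ \<sigma>])
    using wf env C D E Fimp unfolding X_def by blast
qed


end
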